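(* Let Assumption (W) hold and assume additionally that $W$ does not depend on $x_3$ (so $Q$, $Q_2$ do not either). Then for all $A,U\in\mathbb R^{2\times2}_{sym}$: $Q_{el}(A)=\frac1{12}\min_{d\in\mathbb R^3}Q\big(\iota(A)+\mathrm{sym}(d\otimes e_3)\big)$, $E_{res}(U)=\frac3{16}Q_{el}(U)$, and $\mathbb B(U)=\frac34U$. If moreover $Q(A)=\frac\lambda2(\mathrm{tr}A)^2+\mu|\mathrm{sym}A|^2$ for all $A\in\mathbb R^{3\times3}$ (with constants $\lambda,\mu$ for which this $Q$ is compatible with Assumption (W)), then $Q_{el}(A)=\frac1{12}\Big(\frac{\mu\lambda}{\lambda+2\mu}(\mathrm{tr}A)^2+\mu|A|^2\Big)$ and $E_{res}(U)=\frac1{64}\Big(\frac{\mu\lambda}{\lambda+2\mu}(\mathrm{tr}U)^2+\mu|U|^2\Big)$.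
   Context: Assumption (W): there are $C_W>0$, $q_W>4$ and a monotone $r_W:[0,\infty)\to[0,\infty]$ with $r_W(\delta)\to0$ as $\delta\to0$, and $W:(-\frac12,\frac12)\times\mathbb R^{3\times3}\to[0,\infty]$ is Borel with, for all $x_3$: (W1) $W(x_3,RF)=W(x_3,F)$ for all $R\in SO(3)$; (W2) $W(x_3,F)\ge C_W^{-1}\mathrm{dist}^2(F,SO(3))$ for all $F$, and $W(x_3,F)\le C_W\mathrm{dist}^2(F,SO(3))$ whenever $\mathrm{dist}^2(F,SO(3))\le1/C_W$; (W3) there is a quadratic form $Q(x_3,\cdot)$ on $\mathbb R^{3\times3}$ with $|W(x_3,I+G)-Q(x_3,G)|\le|G|^2r_W(|G|)$; (W4) $W(x_3,F)\ge C_W^{-1}\max\{|F|^{q_W},(\det F)^{-q_W/2}\}-C_W$ if $\det F>0$, $W(x_3,F)=+\infty$ if $\det F\le0$. Notation: for $A\in\mathbb R^{2\times2}$, $\iota(A)\in\mathbb R^{3\times3}$ has upper-left block $A$ and zeros elsewhere; $\mathrm{sym}G=\frac12(G+G^\top)$; $A\cdot B=\mathrm{tr}(A^\top B)$. For $A,U\in\mathbb R^{2\times2}_{sym}$: $Q_2(x_3,A):=\min_{d\in\mathbb R^3}Q(x_3,\iota(A)+\mathrm{sym}(d\otimes e_3))$; $Q_{el}(A):=\min_{M\in\mathbb R^{2\times2}_{sym}}\int_{-1/2}^{1/2}Q_2(x_3,x_3A+M)\,dx_3$; $E_{res}(U):=\min_{A,M\in\mathbb R^{2\times2}_{sym}}\int_{-1/2}^{1/2}Q_2(x_3,x_3A+M+\mathbf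 1(x_3>0)\tfrac12U)\,dx_3$. With $G_1=e_1\otimes e_1$, $G_2=e_2\otimes e_2$, $G_3=\frac1{\sqrt2}(e_1\otimes e_2+e_2\otimes e_1)$, let $(A_i,M_i)$ be the unique minimizer over $(\mathbb R^{2\times2}_{sym})^2$ of $(A,M)\mapsto\int_{-1/2}^{1/2}Q_2(x_3,\mathbf 1(x_3>0)\tfrac12G_i-(x_3A+M))dx_3$, and $\mathbb B(U):=\sum_{i=1}^3(U\cdot G_i)A_i$. *)

theory Defs
  imports "HOL-Analysis.Analysis"
begin

type_synonym mat3 = "real^3^3"
type_synonym mat2 = "real^2^2"

definition Sym2 :: "mat2 set" where
  "Sym2 = {A. transpose A = A}"

definition SO3 :: "mat3 set" where
  "SO3 = {R. orthogonal_matrix R \<and> det R = 1}"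

text \<open>Symmetric part, outer product, third basis vector, embedding iota.
  Indices of type 3 are 1,2,3 (3 = 0 in the numeral type); of type 2 are 1,2.\<close>
definition symm :: "'a::field^'n^'n \<Rightarrow> 'a^'n^'n" where
  "symm G = (\<chi> i j. (G $ i $ j + G $ j $ i) / 2)"

definition outer :: "real^3 \<Rightarrow> real^3 \<Rightarrow> mat3" where
  "outer a b = (\<chi> i j. a $ i * b $ j)"

definition e3 :: "real^3" where
  "e3 = axis (3::3) 1"

definition iota :: "mat2 \<Rightarrow> mat3" where
  "iota A = (\<chi> i j.
     if i = 1 \<and> j = 1 then A $ 1 $ 1
     else if i = 1 \<and> j = 2 then A $ 1 $ 2
     else if i = 2 \<and> j = 1 then A $ 2 $ 1
     else if i = 2 \<and> j = 2 then A $ 2 $ 2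
     else 0)"

definition quadratic_form :: "(mat3 \<Rightarrow> real) \<Rightarrow> bool" where
  "quadratic_form Q \<longleftrightarrow> (\<exists>B. bilinear B \<and> (\<forall>G. Q G = B G G))"

definition assumption_W :: "real \<Rightarrow> real \<Rightarrow> (real \<Rightarrow> ereal) \<Rightarrow> (mat3 \<Rightarrow> ereal) \<Rightarrow> (mat3 \<Rightarrow> real) \<Rightarrow> bool" where
  "assumption_W CW qW rW W Q \<longleftrightarrow>
     CW > 0 \<and> qW > 4 \<and>
     (\<forall>d. 0 \<le> d \<longrightarrow> 0 \<le> rW d) \<and> mono_on {0..} rW \<and> (rW \<longlongrightarrow> 0) (at 0 within {0..}) \<and>
     W \<in> borel_measurable borel \<and> (\<forall>F. 0 \<le> W F) \<and>
     (\<forall>R\<in>SO3. \<forall>F. W (R ** F) = W F) \<and>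
     (\<forall>F. W F \<ge> ereal ((infdist F SO3)\<^sup>2 / CW)) \<and>
     (\<forall>F. (infdist F SO3)\<^sup>2 \<le> 1 / CW \<longrightarrow> W F \<le> ereal (CW * (infdist F SO3)\<^sup>2)) \<and>
     quadratic_form Q \<and>
     (\<forall>G. \<bar>W (mat 1 + G) - ereal (Q G)\<bar> \<le> ereal ((norm G)\<^sup>2) * rW (norm G)) \<and>
     (\<forall>F. det F > 0 \<longrightarrow>
         W F \<ge> ereal (max (norm F powr qW) (det F powr (- qW / 2)) / CW - CW)) \<and>
     (\<forall>F. det F \<le> 0 \<longrightarrow> W F = \<infinity>)"

definition Q2 :: "(real \<Rightarrow> mat3 \<Rightarrow> real) \<Rightarrow> real \<Rightarrow> mat2 \<Rightarrow> real" where
  "Q2 Qx x3 A = (INF d. Qx x3 (iota A + symm (outer d e3)))"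

definition Qel :: "(real \<Rightarrow> mat3 \<Rightarrow> real) \<Rightarrow> mat2 \<Rightarrow> real" where
  "Qel Qx A = (INF M\<in>Sym2. integral {-(1/2)..1/2} (\<lambda>x3. Q2 Qx x3 (x3 *\<^sub>R A + M)))"

definition Eres :: "(real \<Rightarrow> mat3 \<Rightarrow> real) \<Rightarrow> mat2 \<Rightarrow> real" where
  "Eres Qx U = (INF AM\<in>Sym2 \<times> Sym2. integral {-(1/2)..1/2}
      (\<lambda>x3. Q2 Qx x3 (x3 *\<^sub>R fst AM + snd AM + (if x3 > 0 then (1/2) *\<^sub>R U else 0))))"

definition Gb :: "nat \<Rightarrow> mat2" where
  "Gb i = (if i = 1 then (\<chi> a b. if a = 1 \<and> b = 1 then 1 else 0)
           else if i = 2 then (\<chi> a b. if a = 2 \<and> b = 2 then 1 else 0)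
           else (\<chi> a b. if a \<noteq> b then 1 / sqrt 2 else 0))"

definition Jfun :: "(real \<Rightarrow> mat3 \<Rightarrow> real) \<Rightarrow> nat \<Rightarrow> mat2 \<times> mat2 \<Rightarrow> real" where
  "Jfun Qx i AM = integral {-(1/2)..1/2}
      (\<lambda>x3. Q2 Qx x3 ((if x3 > 0 then (1/2) *\<^sub>R Gb i else 0) - (x3 *\<^sub>R fst AM + snd AM)))"

definition minimizer :: "(real \<Rightarrow> mat3 \<Rightarrow> real) \<Rightarrow> nat \<Rightarrow> mat2 \<times> mat2" where
  "minimizer Qx i = (THE AM. AM \<in> Sym2 \<times> Sym2 \<and> (\<forall>AM'\<in>Sym2 \<times> Sym2. Jfun Qx i AM \<le> Jfun Qx i AM'))"

definition BB :: "(real \<Rightarrow> mat3 \<Rightarrow> real) \<Rightarrow> mat2 \<Rightarrow> mat2" where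
  "BB Qx U = (\<Sum>i\<in>{1,2,3::nat}. (U \<bullet> Gb i) *\<^sub>R fst (minimizer Qx i))"

end

theory Submission
  imports Defs
begin

lemma norm_row_sq: "(norm (X::'a::real_inner^'m))\<^sup>2 = (\<Sum>i\<in>UNIV. (norm (X$i))\<^sup>2)"
  by (simp add: power2_norm_eq_inner inner_vec_def)

lemma vec_norm_sq: "(norm (v::real^'n))\<^sup>2 = (\<Sum>j\<in>UNIV. (v$j)\<^sup>2)"
  by (simp add: norm_row_sq)

lemma frob_sq: "(norm (X::real^'n^'m))\<^sup>2 = (\<Sum>i\<in>UNIV. \<Sum>j\<in>UNIV. (X$i$j)\<^sup>2)"
  unfolding norm_row_sq[of X] vec_norm_sq ..

lemma norm_transpose: "norm (transpose (X::real^'n^'m)) = norm X"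
proof -
  have "(norm (transpose X))\<^sup>2 = (\<Sum>i\<in>UNIV. \<Sum>j\<in>UNIV. (X$j$i)\<^sup>2)"
    unfolding frob_sq transpose_def by simp
  also have "\<dots> = (norm X)\<^sup>2" unfolding frob_sq by (rule sum.swap)
  finally show ?thesis by (simp add: power2_eq_iff_nonneg)
qed

lemma norm_mmult: "norm ((X::real^'n^'m) ** (Y::real^'p^'n)) \<le> norm X * norm Y"
proof -
  have ent: "\<bar>(X ** Y)$i$j\<bar> \<le> norm (X$i) * norm (column j Y)" for i j
  proof -
    have "(X ** Y)$i$j = inner (X$i) (column j Y)"
      by (simp add: matrix_matrix_mult_def inner_vec_def column_def mult.commute)
    then show ?thesis using Cauchy_Schwarz_ineq2 by simp
  qed
  have "(norm (X ** Y))\<^sup>2 = (\<Sum>i\<in>UNIV. \<Sum>j\<in>UNIV. ((X ** Y)$i$j)\<^sup>2)" by (rule frob_sq)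
  also have "\<dots> \<le> (\<Sum>i\<in>UNIV. \<Sum>j\<in>UNIV. (norm (X$i))\<^sup>2 * (norm (column j Y))\<^sup>2)"
  proof (intro sum_mono)
    fix i j
    have "((X ** Y)$i$j)\<^sup>2 = \<bar>(X ** Y)$i$j\<bar>\<^sup>2" by simp
    also have "\<dots> \<le> (norm (X$i) * norm (column j Y))\<^sup>2"
      by (rule power_mono[OF ent]) simp
    finally show "((X ** Y)$i$j)\<^sup>2 \<le> (norm (X$i))\<^sup>2 * (norm (column j Y))\<^sup>2"
      by (simp add: power_mult_distrib)
  qed
  also have "\<dots> = (\<Sum>i\<in>UNIV. (norm (X$i))\<^sup>2) * (\<Sum>j\<in>UNIV. (norm (column j Y))\<^sup>2)"
    by (simp add: sum_product)
  also have "(\<Sum>j\<in>UNIV. (norm (column j Y))\<^sup>2) = (\<Sum>j\<in>UNIV. \<Sum>k\<in>UNIV. (Y$k$j)\<^sup>2)"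
    by (simp add: vec_norm_sq column_def)
  also have "\<dots> = (norm Y)\<^sup>2" unfolding frob_sq by (rule sum.swap)
  also have "(\<Sum>i\<in>UNIV. (norm (X$i))\<^sup>2) = (norm X)\<^sup>2" by (simp add: norm_row_sq)
  finally have "(norm (X ** Y))\<^sup>2 \<le> (norm X * norm Y)\<^sup>2" by (simp add: power_mult_distrib)
  then show ?thesis by (rule power2_le_imp_le) simp
qed

lemma norm_orth_sq: assumes "transpose R ** R = (mat 1 :: real^3^3)" shows "(norm R)\<^sup>2 = 3"
proof -
  have "(\<Sum>j\<in>UNIV. (transpose R ** R)$j$j) = (\<Sum>j\<in>UNIV. \<Sum>k\<in>UNIV. (R$k$j)\<^sup>2)"
    by (simp add: matrix_matrix_mult_def transpose_def power2_eq_square)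
  also have "\<dots> = (norm R)\<^sup>2" unfolding frob_sq by (rule sum.swap)
  finally have "(norm R)\<^sup>2 = (\<Sum>j\<in>UNIV. (transpose R ** R)$j$j)" ..
  also have "\<dots> = 3" using assms by (simp add: mat_def)
  finally show ?thesis .
qed

lemma orth_ident:
  assumes "transpose R ** R = (mat 1 :: real^3^3)"
  shows "transpose F ** F - mat 1 = transpose (F - R) ** (F - R) + transpose (F - R) ** R + transpose R ** (F - R)"
proof -
  have h: "\<And>i j. (mat 1 :: real^3^3)$i$j = (\<Sum>k\<in>UNIV. R$k$i * R$k$j)"
    using assms by (simp add: vec_eq_iff matrix_matrix_mult_def transpose_def)
  have e: "(\<Sum>k\<in>UNIV. F$k$i*F$k$j) - (\<Sum>k\<in>UNIV. R$k$i*R$k$j)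
     = (\<Sum>k\<in>UNIV. (F$k$i - R$k$i)*(F$k$j-R$k$j)) + (\<Sum>k\<in>UNIV. (F$k$i - R$k$i)*R$k$j)
       + (\<Sum>k\<in>UNIV. R$k$i*(F$k$j - R$k$j))" for i j
  proof -
    have "(\<Sum>k\<in>UNIV. F$k$i*F$k$j) - (\<Sum>k\<in>UNIV. R$k$i*R$k$j) = (\<Sum>k\<in>UNIV. F$k$i*F$k$j - R$k$i*R$k$j)"
      by (rule sum_subtractf[symmetric])
    also have "\<dots> = (\<Sum>k\<in>UNIV. ((F$k$i - R$k$i)*(F$k$j-R$k$j) + (F$k$i - R$k$i)*R$k$j) + R$k$i*(F$k$j - R$k$j))"
      by (intro sum.cong refl) (simp add: algebra_simps)
    also have "\<dots> = (\<Sum>k\<in>UNIV. (F$k$i - R$k$i)*(F$k$j-R$k$j)) + (\<Sum>k\<in>UNIV. (F$k$i - R$k$i)*R$k$j)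
       + (\<Sum>k\<in>UNIV. R$k$i*(F$k$j - R$k$j))"
      by (simp only: sum.distrib)
    finally show ?thesis .
  qed
  show ?thesis
    unfolding vec_eq_iff
    by (simp only: matrix_matrix_mult_def transpose_def vec_lambda_beta vector_minus_component
        vector_add_component h e) simp
qed
lemma transpose_add: "transpose (A + B) = transpose A + transpose (B::'a::ring_1^'n^'m)"
  by (simp add: transpose_def vec_eq_iff)

lemma matrix_add_rdistrib': "((A::'a::semiring_1^'n^'m) + B) ** C = A ** C + B ** C"
  by (simp add: matrix_matrix_mult_def vec_eq_iff sum.distrib distrib_right)

lemma FtF: fixes G :: "real^3^3"
  shows "transpose (mat 1 + t *\<^sub>R G) ** (mat 1 + t *\<^sub>R G) - mat 1
     = t *\<^sub>R (G + transpose G) + (t*t) *\<^sub>R (transpose G ** G)"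
  by (simp add: transpose_add transpose_scalar matrix_add_ldistrib matrix_add_rdistrib'
      matrix_scalar_ac scalar_matrix_assoc[symmetric] algebra_simps)

lemma symm_transpose: "G + transpose G = 2 *\<^sub>R symm (G::real^'n^'n)"
  by (simp add: vec_eq_iff symm_def transpose_def)

lemma norm_tri3: "norm (a + b + c) \<le> norm a + norm b + norm (c::'a::real_normed_vector)"
  by (meson add_right_mono norm_triangle_ineq order_trans)

lemma dist_lower:
  fixes G R :: "real^3^3" assumes R: "transpose R ** R = mat 1" and t: "t \<ge> 0"
  shows "2*t*norm (symm G) - t^2*(norm G)^2
     \<le> (dist (mat 1 + t *\<^sub>R G) R)^2 + 4 * dist (mat 1 + t *\<^sub>R G) R"
proof -
  define F where "F = mat 1 + t *\<^sub>R G"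
  define e where "e = dist F R"
  have e: "e = norm (F - R)" by (simp add: e_def dist_norm)
  have e0: "e \<ge> 0" by (simp add: e_def)
  have R2: "norm R \<le> 2"
  proof (rule power2_le_imp_le)
    show "(norm R)\<^sup>2 \<le> 2\<^sup>2" using norm_orth_sq[OF R] by simp
  qed simp
  have n1: "norm (transpose (F-R) ** (F-R)) \<le> e*e"
    using norm_mmult[of "transpose (F-R)" "F-R"] by (simp add: norm_transpose e)
  have n2: "norm (transpose (F-R) ** R) \<le> e*2"
  proof -
    have "norm (transpose (F-R) ** R) \<le> e * norm R"
      using norm_mmult[of "transpose (F-R)" R] by (simp add: norm_transpose e)
    also have "\<dots> \<le> e*2" using R2 e0 by (rule mult_left_mono)
    finally show ?thesis .
  qed
  have n3: "norm (transpose R ** (F-R)) \<le> 2*e"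
  proof -
    have "norm (transpose R ** (F-R)) \<le> norm R * e"
      using norm_mmult[of "transpose R" "F-R"] by (simp add: norm_transpose e)
    also have "\<dots> \<le> 2*e" using R2 e0 by (rule mult_right_mono)
    finally show ?thesis .
  qed
  have "norm (transpose F ** F - mat 1)
     \<le> norm (transpose (F-R) ** (F-R)) + norm (transpose (F-R) ** R) + norm (transpose R ** (F-R))"
    unfolding orth_ident[OF R] by (rule norm_tri3)
  with n1 n2 n3 have up: "norm (transpose F ** F - mat 1) \<le> e^2 + 4*e"
    by (simp add: power2_eq_square)
  have eq: "transpose F ** F - mat 1 = (2*t) *\<^sub>R symm G + (t*t) *\<^sub>R (transpose G ** G)"
    unfolding F_def FtF symm_transpose by simp
  have a: "norm ((t*t) *\<^sub>R (transpose G ** G)) \<le> t^2 * (norm G)^2"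
    using norm_mmult[of "transpose G" G] t
    by (simp add: norm_transpose power2_eq_square mult_left_mono)
  have b: "norm ((2*t) *\<^sub>R symm G) = 2*t*norm (symm G)" using t by simp
  have c: "norm ((2*t) *\<^sub>R symm G) - norm ((t*t) *\<^sub>R (transpose G ** G)) \<le> norm (transpose F ** F - mat 1)"
    unfolding eq by (rule norm_diff_ineq)
  have "2*t*norm (symm G) - t^2*(norm G)^2 \<le> e^2 + 4*e" using a b c up by linarith
  then show ?thesis by (simp add: e_def F_def)
qed

lemma lim_lemma:
  fixes r :: "real \<Rightarrow> ereal" and a :: "real \<Rightarrow> real"
  assumes r: "(r \<longlongrightarrow> 0) (at_right 0)" and a: "(a \<longlongrightarrow> a0) (at_right 0)"
    and ev: "eventually (\<lambda>u. \<forall>x. r u = ereal x \<longrightarrow> a u - c * x \<le> q) (at_right 0)"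
  shows "a0 \<le> q"
proof -
  have e1: "eventually (\<lambda>u. r u < 1) (at_right 0)" using r by (rule order_tendstoD) simp
  have e2: "eventually (\<lambda>u. r u > -1) (at_right 0)" using r by (rule order_tendstoD) simp
  have r': "((\<lambda>u. real_of_ereal (r u)) \<longlongrightarrow> 0) (at_right 0)"
    using lim_real_of_ereal[of r 0] r by (simp add: zero_ereal_def)
  have "eventually (\<lambda>u. a u - c * real_of_ereal (r u) \<le> q) (at_right 0)"
    using e1 e2 ev
  proof eventually_elim
    case (elim u)
    then show ?case by (cases "r u") auto
  qed
  moreover have "((\<lambda>u. a u - c * real_of_ereal (r u)) \<longlongrightarrow> a0 - c * 0) (at_right 0)"
    by (intro tendsto_intros a r')
  ultimately show ?thesis using tendsto_upperbound by fastforce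
qed


lemma SO3_ne: "mat 1 \<in> SO3"
  by (simp add: SO3_def orthogonal_matrix_id)

lemma coercive:
  assumes AW: "assumption_W CW qW rW W Q"
  shows "Q G \<ge> 4/(25*CW) * (norm (symm G))^2"
proof -
  from AW have CW: "CW > 0" and rlim0: "(rW \<longlongrightarrow> 0) (at 0 within {0..})" and W0: "\<forall>F. 0 \<le> W F"
    and Wlow: "\<forall>F. W F \<ge> ereal ((infdist F SO3)^2 / CW)" and qf: "quadratic_form Q"
    and W3: "\<forall>G. \<bar>W (mat 1 + G) - ereal (Q G)\<bar> \<le> ereal ((norm G)^2) * rW (norm G)"
    unfolding assumption_W_def by auto
  obtain B where B: "bilinear B" "\<forall>G. Q G = B G G" using qf unfolding quadratic_form_def by auto
  have Qs: "Q (t *\<^sub>R H) = t^2 * Q H" for t H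
    using B by (simp add: bilinear_lmul bilinear_rmul power2_eq_square)
  have rlim: "(rW \<longlongrightarrow> 0) (at_right 0)" using rlim0 by (rule tendsto_within_subset) auto
  define s where "s = norm (symm G)"
  define g where "g = norm G"
  have basic: "Q (t *\<^sub>R G) \<ge> m^2/CW - u^2 * x"
    if u: "u > 0" and t: "t = u / g" and g: "g > 0" and m: "0 \<le> m" "m \<le> infdist (mat 1 + t *\<^sub>R G) SO3"
      and rx: "rW u = ereal x" for u t m x
  proof -
    define F where "F = mat 1 + t *\<^sub>R G"
    have nt: "norm (t *\<^sub>R G) = u" using u g t by (simp add: g_def)
    have w3: "\<bar>W F - ereal (Q (t *\<^sub>R G))\<bar> \<le> ereal (u^2 * x)"
      using W3[rule_format, of "t *\<^sub>R G"] nt rx by (simp add: F_def)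
    have "m^2 \<le> (infdist F SO3)^2" using m by (intro power_mono) (auto simp: F_def)
    then have wl: "W F \<ge> ereal (m^2/CW)"
      using Wlow[rule_format, of F] CW
      by (meson divide_right_mono ereal_less_eq(3) less_eq_real_def order_trans)
    show ?thesis
    proof (cases "W F")
      case (real w)
      then show ?thesis using w3 wl by auto
    next
      case PInf then show ?thesis using w3 by simp
    next
      case MInf then show ?thesis using W0[rule_format, of F] by simp
    qed
  qed
  show ?thesis
  proof (cases "G = 0")
    case True
    have "Q 0 = 0" using Qs[of 0 0] by simp
    moreover have "symm (0::real^3^3) = 0" by (simp add: symm_def vec_eq_iff)
    ultimately show ?thesis using True by simp
  next
    case False
    hence g: "g > 0" by (simp add: g_def)
    have nonneg: "0 \<le> Q G"
    proof (rule lim_lemma[OF rlim, of "\<lambda>u. 0" 0 "g^2"])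
      show "((\<lambda>u. 0::real) \<longlongrightarrow> 0) (at_right 0)" by simp
      show "\<forall>\<^sub>F u in at_right 0. \<forall>x. rW u = ereal x \<longrightarrow> 0 - g\<^sup>2 * x \<le> Q G"
        unfolding eventually_at_right_field
      proof (intro exI[of _ 1] conjI allI impI)
        fix u x assume u: "u > 0" and "u < 1" and rx: "rW u = ereal x"
        define t where "t = u / g"
        have t: "t > 0" using u g by (simp add: t_def)
        have "Q (t *\<^sub>R G) \<ge> 0^2/CW - u^2 * x"
          by (rule basic[OF u t_def g]) (auto simp: infdist_nonneg rx)
        then have "t^2 * Q G \<ge> t^2 * (-(g^2 * x))" using Qs t g by (simp add: t_def field_simps)
        then have "-(g^2 * x) \<le> Q G" by (rule mult_left_le_imp_le) (use t in simp)
        then show "0 - g\<^sup>2 * x \<le> Q G" by simp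
      qed simp
    qed
    show ?thesis
    proof (cases "s = 0")
      case True then show ?thesis using nonneg by (simp add: s_def)
    next
      case False
      hence s: "s > 0" by (simp add: s_def)
      have "(2* s)^2/(25*CW) \<le> Q G"
      proof (rule lim_lemma[OF rlim, of "\<lambda>u. (2* s - u*g)^2/(25*CW)" _ "g^2"])
        show "((\<lambda>u. (2* s - u*g)^2/(25*CW)) \<longlongrightarrow> (2* s)^2/(25*CW)) (at_right 0)"
          by (rule tendsto_eq_intros refl | use CW in simp)+
        show "\<forall>\<^sub>F u in at_right 0. \<forall>x. rW u = ereal x \<longrightarrow> (2* s - u*g)^2/(25*CW) - g\<^sup>2 * x \<le> Q G"
          unfolding eventually_at_right_field
        proof (intro exI[of _ "min (s/g) (5*g/(2* s))"] conjI allI impI)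
          fix u x assume u: "u > 0" and ub: "u < min (s/g) (5*g/(2* s))" and rx: "rW u = ereal x"
          define t where "t = u / g"
          have t: "t > 0" using u g by (simp add: t_def)
          have ug: "u*g < s" using ub g by (simp add: field_simps)
          have ts: "t*(2* s) \<le> 5" using ub g s by (simp add: t_def field_simps)
          define m where "m = t*(2* s - u*g)/5"
          have p0: "0 \<le> 2 * s - u*g" using ug s by linarith
          have m0: "0 \<le> m" using t p0 by (simp add: m_def)
          have "t*(2 * s - u*g) \<le> t*(2 * s)"
            using t g u by (intro mult_left_mono) auto
          then have m1: "m \<le> 1" using ts unfolding m_def by linarith
          have tg: "t*g^2 = u*g" using g by (simp add: t_def power2_eq_square)
          have mi: "m \<le> infdist (mat 1 + t *\<^sub>R G) SO3"
          proof -
            have "m \<le> dist (mat 1 + t *\<^sub>R G) R" if R: "R \<in> SO3" for R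
            proof -
              have RR: "transpose R ** R = mat 1" using R by (simp add: SO3_def orthogonal_matrix)
              define e where "e = dist (mat 1 + t *\<^sub>R G) R"
              have "2*t* s - t^2*g^2 \<le> e^2 + 4*e"
                using dist_lower[OF RR, of t G] t by (simp add: e_def s_def g_def)
              moreover have "2*t* s - t^2*g^2 = 5*m"
              proof -
                have "t^2*g^2 = t*(t*g^2)" by (simp add: power2_eq_square)
                also have "\<dots> = t*(u*g)" using tg by simp
                finally show ?thesis by (simp add: m_def algebra_simps)
              qed
              moreover have "e \<ge> 0" by (simp add: e_def)
              ultimately have A: "5*m \<le> e^2 + 4*e" "0 \<le> e" by auto
              show ?thesis
              proof (cases "e \<ge> 1")
                case True then show ?thesis using m1 by (simp add: e_def)
              next
                case False
                then have "e*e \<le> 1*e" using A(2) by (intro mult_right_mono) auto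
                then show ?thesis using A by (simp add: e_def power2_eq_square)
              qed
            qed
            moreover have ne: "SO3 \<noteq> {}" using SO3_ne by auto
            ultimately show ?thesis
              unfolding infdist_notempty[OF ne] by (intro cINF_greatest) auto
          qed
          have "Q (t *\<^sub>R G) \<ge> m^2/CW - u^2 * x"
            by (rule basic[OF u t_def g m0 mi rx])
          moreover have "m^2/CW - u^2*x = t^2 * ((2* s - u*g)^2/(25*CW) - g^2 * x)"
            using g CW by (simp add: m_def t_def field_simps power2_eq_square)
          ultimately have "t^2 * Q G \<ge> t^2 * ((2* s - u*g)^2/(25*CW) - g^2 * x)" using Qs by simp
          then show "(2* s - u*g)^2/(25*CW) - g\<^sup>2 * x \<le> Q G" by (rule mult_left_le_imp_le) (use t in simp)
        qed (use s g in simp)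
      qed
      then show ?thesis by (simp add: s_def power2_eq_square)
    qed
  qed
qed

definition Vd :: "real^3 \<Rightarrow> mat3" where "Vd d = symm (outer d e3)"

lemma e3_comp: "e3 $ 1 = 0" "e3 $ 2 = 0" "e3 $ 3 = 1"
  by (simp_all add: e3_def axis_def)

lemma Vd_ent: "Vd d $ i $ j = (d$i * e3$j + d$j * e3$i)/2"
  by (simp add: Vd_def symm_def outer_def)

lemma Vd_norm: "(norm d)\<^sup>2 \<le> 2 * (norm (Vd d))\<^sup>2"
proof -
  have "(norm (Vd d))\<^sup>2 = (\<Sum>i\<in>UNIV. \<Sum>j\<in>UNIV. (Vd d $ i $ j)\<^sup>2)"
    by (rule frob_sq)
  also have "\<dots> = (d$1)^2/2 + (d$2)^2/2 + (d$3)^2"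
    by (simp add: sum_3 Vd_ent e3_comp power2_eq_square field_simps)
  finally have a: "(norm (Vd d))\<^sup>2 = (d$1)^2/2 + (d$2)^2/2 + (d$3)^2" .
  have "(norm d)\<^sup>2 = (d$1)^2 + (d$2)^2 + (d$3)^2"
    by (simp add: vec_norm_sq sum_3)
  with a show ?thesis by simp
qed

lemma iota_ent: "iota A $ 1 $ 1 = A$1$1" "iota A $ 1 $ 2 = A$1$2" "iota A $ 2 $ 1 = A$2$1" "iota A $ 2 $ 2 = A$2$2"
  by (simp_all add: iota_def)

lemma Vd_add: "Vd (a + b) = Vd a + Vd b"
  by (simp add: vec_eq_iff Vd_ent algebra_simps add_divide_distrib)
lemma Vd_scale: "Vd (k *\<^sub>R a) = k *\<^sub>R Vd a"
  by (simp add: vec_eq_iff Vd_ent algebra_simps)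
lemma Vd_diff: "Vd (a - b) = Vd a - Vd b"
  by (simp add: vec_eq_iff Vd_ent algebra_simps diff_divide_distrib)
lemma Vd_zero: "Vd 0 = 0" using Vd_scale[of 0 0] by simp
lemma linear_Vd: "linear Vd" by (rule linearI) (simp_all add: Vd_add Vd_scale)
lemma symm_Vd: "symm (Vd d) = Vd d" by (simp add: vec_eq_iff symm_def Vd_ent algebra_simps)
lemma symm_add: "symm (X + Y) = symm X + symm (Y::real^'n^'n)"
  by (simp add: vec_eq_iff symm_def add_divide_distrib)
lemma symm_scale: "symm (k *\<^sub>R X) = k *\<^sub>R symm (X::real^'n^'n)"
  by (simp add: vec_eq_iff symm_def algebra_simps)
lemma iota_add: "iota (A + C) = iota A + iota C"
  by (auto simp: vec_eq_iff iota_def)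
lemma iota_scale: "iota (k *\<^sub>R A) = k *\<^sub>R iota A"
  by (auto simp: vec_eq_iff iota_def)

locale qsetup =
  fixes Q :: "mat3 \<Rightarrow> real" and B :: "mat3 \<Rightarrow> mat3 \<Rightarrow> real" and c :: real
  assumes bil: "bilinear B" and QB: "\<And>G. Q G = B G G" and cpos: "c > 0"
    and coer: "\<And>G. c * (norm (symm G))^2 \<le> Q G"
begin

definition Bs where "Bs X Y = (B X Y + B Y X)/2"

lemma Bs_sym: "Bs X Y = Bs Y X" by (simp add: Bs_def)
lemma Bs_add1: "Bs (X + Y) Z = Bs X Z + Bs Y Z"
  using bil by (simp add: Bs_def bilinear_ladd bilinear_radd field_simps)
lemma Bs_diff1: "Bs (X - Y) Z = Bs X Z - Bs Y Z"
  using bil by (simp add: Bs_def bilinear_lsub bilinear_rsub field_simps)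
lemma Bs_scale1: "Bs (k *\<^sub>R X) Z = k * Bs X Z"
  using bil by (simp add: Bs_def bilinear_lmul bilinear_rmul field_simps)
lemma Bs_add2: "Bs Z (X + Y) = Bs Z X + Bs Z Y"
  using Bs_add1 Bs_sym by metis
lemma Bs_scale2: "Bs Z (k *\<^sub>R X) = k * Bs Z X"
  using Bs_scale1 Bs_sym by metis
lemma Q_Bs: "Q X = Bs X X" by (simp add: Bs_def QB)
lemma Q_add: "Q (X + Y) = Q X + 2 * Bs X Y + Q Y"
  using bil by (simp add: QB Bs_def bilinear_ladd bilinear_radd)
lemma Q_scale: "Q (k *\<^sub>R X) = k^2 * Q X"
  using bil by (simp add: QB bilinear_lmul bilinear_rmul power2_eq_square)
lemma Q_nonneg: "0 \<le> Q X"
  using coer[of X] cpos by (meson mult_nonneg_nonneg order_trans less_imp_le zero_le_power2)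
lemma Q_zero: assumes "Q X = 0" shows "symm X = 0"
proof -
  have "c * (norm (symm X))^2 \<le> 0" using coer[of X] assms by simp
  then have "(norm (symm X))^2 \<le> 0" using cpos by (simp add: mult_le_0_iff)
  then show ?thesis by simp
qed

lemma foc: assumes "\<And>s. Q Y \<le> Q (Y + s *\<^sub>R Z)" shows "Bs Y Z = 0"
proof -
  define a where "a = Bs Y Z"
  define q where "q = Q Z"
  have q: "q \<ge> 0" by (simp add: q_def Q_nonneg)
  define s where "s = -a/(q+1)"
  have "Q Y \<le> Q Y + 2*(s*a) + s^2*q" using assms[of s]
    by (simp add: Q_add Bs_scale2 Q_scale a_def q_def)
  hence h: "0 \<le> 2*(s*a) + s^2*q" by simp
  have q1: "q + 1 \<noteq> 0" using q by simp
  have sq: "s*(q+1) = -a" using q1 by (simp add: s_def)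
  have "(q+1)^2 * (2*(s*a) + s^2*q) = 2*(q+1)*a*(s*(q+1)) + q*(s*(q+1))^2"
    by (simp add: power2_eq_square algebra_simps)
  also have "\<dots> = -(a^2*(q+2))" unfolding sq by (simp add: power2_eq_square algebra_simps)
  finally have e: "(q+1)^2 * (2*(s*a) + s^2*q) = -(a^2*(q+2))" .
  have "0 \<le> (q+1)^2 * (2*(s*a) + s^2*q)" using h by simp
  with e have "a^2*(q+2) \<le> 0" by simp
  moreover have "0 \<le> a^2*(q+2)" using q by simp
  ultimately have "a^2*(q+2) = 0" by linarith
  then show ?thesis using q by (simp add: a_def)
qed

lemma exmin: "\<exists>d0. \<forall>d. Q (X + Vd d0) \<le> Q (X + Vd d)"
proof -
  define R0 where "R0 = 2*(norm (symm X) + sqrt (Q X / c)) + 1"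
  have R0: "R0 \<ge> 0" unfolding R0_def using Q_nonneg cpos by simp
  have cont: "continuous_on (cball 0 R0) (\<lambda>d. Q (X + Vd d))"
  proof -
    have bl: "bounded_linear Vd" using linear_Vd linear_conv_bounded_linear by blast
    have "continuous_on (cball 0 R0) (\<lambda>d. X + Vd d)"
      by (intro continuous_on_add continuous_on_const linear_continuous_on bl)
    then show ?thesis unfolding QB by (intro bilinear_continuous_on_compose[OF _ _ bil])
  qed
  obtain d0 where d0: "d0 \<in> cball 0 R0" "\<forall>d\<in>cball 0 R0. Q(X + Vd d0) \<le> Q(X + Vd d)"
    using continuous_attains_inf[OF compact_cball _ cont] R0 by fastforce
  have "Q (X + Vd d0) \<le> Q (X + Vd d)" for d
  proof (cases "d \<in> cball 0 R0")
    case True thus ?thesis using d0 by auto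
  next
    case False
    hence nd: "norm d > R0" by simp
    have "(2*norm (Vd d))^2 = 4*(norm (Vd d))^2" by (simp add: power_mult_distrib)
    hence "(norm d)^2 \<le> (2*norm (Vd d))^2" using Vd_norm[of d] zero_le_power2[of "norm (Vd d)"] by linarith
    hence "norm d \<le> 2*norm (Vd d)" by (rule power2_le_imp_le) simp
    hence v: "norm (Vd d) > norm (symm X) + sqrt (Q X / c)" using nd unfolding R0_def by (simp add: algebra_simps)
    have "norm (Vd d) - norm (symm X) \<le> norm (Vd d + symm X)" by (rule norm_diff_ineq)
    moreover have "symm (X + Vd d) = Vd d + symm X" by (simp add: symm_add symm_Vd)
    ultimately have y: "sqrt (Q X / c) < norm (symm (X + Vd d))" using v by simp
    have "Q X / c < (norm (symm (X + Vd d)))^2"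
    proof -
      have "Q X / c = (sqrt (Q X / c))^2" using Q_nonneg cpos by simp
      also have "\<dots> < (norm (symm (X + Vd d)))^2" using y Q_nonneg[of X] cpos by (intro power_strict_mono) auto
      finally show ?thesis .
    qed
    hence "Q X < c * (norm (symm (X + Vd d)))^2" using cpos by (simp add: field_simps)
    hence "Q X < Q (X + Vd d)" using coer[of "X + Vd d"] by linarith
    moreover have "Q (X + Vd d0) \<le> Q X" using d0(2)[rule_format, of 0] R0 by (simp add: Vd_zero)
    ultimately show ?thesis by linarith
  qed
  thus ?thesis by blast
qed

definition dstar where "dstar X = (SOME d0. \<forall>d. Q (X + Vd d0) \<le> Q (X + Vd d))"
definition L where "L X = X + Vd (dstar X)"

lemma L_min: "Q (L X) \<le> Q (X + Vd d)"
  unfolding L_def dstar_def using someI_ex[OF exmin[of X]] by blast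

lemma L_foc: "Bs (L X) (Vd w) = 0"
proof (rule foc)
  fix s
  have "L X + s *\<^sub>R Vd w = X + Vd (dstar X + s *\<^sub>R w)" by (simp add: L_def Vd_add Vd_scale add.assoc)
  then show "Q (L X) \<le> Q (L X + s *\<^sub>R Vd w)" using L_min by simp
qed

lemma Vd_zero_if: "Bs (Vd w) (Vd w) = 0 \<Longrightarrow> Vd w = 0"
  using Q_zero[of "Vd w"] by (simp add: Q_Bs symm_Vd)

lemma L_add: "L (X + Y) = L X + L Y"
proof -
  define w where "w = dstar (X+Y) - dstar X - dstar Y"
  have D: "L (X+Y) - L X - L Y = Vd w" by (simp add: L_def w_def Vd_diff Vd_add algebra_simps)
  have "Bs (Vd w) (Vd w) = Bs (L (X+Y)) (Vd w) - Bs (L X) (Vd w) - Bs (L Y) (Vd w)"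
    unfolding D[symmetric] by (simp add: Bs_diff1)
  also have "\<dots> = 0" by (simp add: L_foc)
  finally have "Vd w = 0" by (rule Vd_zero_if)
  with D show ?thesis by (simp add: algebra_simps)
qed

lemma L_scale: "L (k *\<^sub>R X) = k *\<^sub>R L X"
proof -
  define w where "w = dstar (k *\<^sub>R X) - k *\<^sub>R dstar X"
  have D: "L (k *\<^sub>R X) - k *\<^sub>R L X = Vd w" by (simp add: L_def w_def Vd_diff Vd_scale algebra_simps)
  have "Bs (Vd w) (Vd w) = Bs (L (k *\<^sub>R X)) (Vd w) - k * Bs (L X) (Vd w)"
    unfolding D[symmetric] by (simp add: Bs_diff1 Bs_scale1)
  also have "\<dots> = 0" by (simp add: L_foc)
  finally have "Vd w = 0" by (rule Vd_zero_if)
  with D show ?thesis by (simp add: algebra_simps)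
qed

lemma INF_L: "(INF d. Q (X + Vd d)) = Q (L X)"
proof (rule cInf_eq_minimum)
  show "Q (L X) \<in> range (\<lambda>d. Q (X + Vd d))" unfolding L_def by auto
next
  fix x assume "x \<in> range (\<lambda>d. Q (X + Vd d))"
  then show "Q (L X) \<le> x" using L_min by auto
qed

definition q2 where "q2 A = Q (L (iota A))"
definition bb where "bb A C = Bs (L (iota A)) (L (iota C))"

lemma Q2_eq: "Q2 (\<lambda>_. Q) x A = q2 A"
  by (simp add: Q2_def q2_def INF_L[symmetric] Vd_def)

lemma bil_bb: "bilinear bb"
  unfolding bilinear_def
  by (auto intro!: linearI simp: bb_def iota_add iota_scale L_add L_scale Bs_add1 Bs_add2 Bs_scale1 Bs_scale2)

lemma q2_bb: "q2 A = bb A A" by (simp add: q2_def bb_def Q_Bs)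
lemma q2_nonneg: "0 \<le> q2 A" by (simp add: q2_def Q_nonneg)

lemma q2_pos: assumes A: "A \<in> Sym2" and z: "q2 A = 0" shows "A = 0"
proof -
  have S: "symm (L (iota A)) = 0" using Q_zero z by (simp add: q2_def)
  have "transpose A $ 2 $ 1 = A $ 2 $ 1" using A by (simp add: Sym2_def)
  then have As: "A$2$1 = A$1$2" by (simp add: transpose_def)
  have "(symm (L (iota A)))$1$1 = A$1$1" "(symm (L (iota A)))$1$2 = A$1$2"
       "(symm (L (iota A)))$2$2 = A$2$2"
    by (simp_all add: L_def symm_def Vd_ent e3_comp iota_ent As)
  with S As show ?thesis by (simp add: vec_eq_iff forall_2)
qed

end


lemma poly_int:
  fixes a b c0 c1 c2 :: real assumes ab: "a \<le> b"
  shows "((\<lambda>x. c2*x^2 + c1*x + c0) has_integral (c2*(b^3-a^3)/3 + c1*(b^2-a^2)/2 + c0*(b-a))) {a..b}"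
proof -
  define F where "F = (\<lambda>x::real. c2*x^3/3 + c1*x^2/2 + c0*x)"
  have "((\<lambda>x. c2*x^2 + c1*x + c0) has_integral (F b - F a)) {a..b}"
  proof (rule fundamental_theorem_of_calculus[OF ab])
    fix x assume "x \<in> {a..b}"
    have "(F has_real_derivative (c2*x^2 + c1*x + c0)) (at x within {a..b})"
      unfolding F_def by (auto intro!: derivative_eq_intros simp: power2_eq_square)
    then show "(F has_vector_derivative (c2*x^2 + c1*x + c0)) (at x within {a..b})"
      by (simp add: has_real_derivative_iff_has_vector_derivative)
  qed
  then show ?thesis by (simp add: F_def algebra_simps diff_divide_distrib)
qed

lemma piece_int:
  fixes p0 p1 p2 r0 r1 :: real
  shows "((\<lambda>x. p2*x^2 + p1*x + p0 + (if x > 0 then r1*x + r0 else 0)) has_integral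
            (p2/12 + p0 + r1/8 + r0/2)) {-(1/2)..1/2}"
proof -
  have i1: "((\<lambda>x. p2*x^2 + p1*x + p0 + (if x > 0 then r1*x + r0 else 0)) has_integral
            (p2/24 - p1/8 + p0/2)) {-(1/2)..0}"
  proof (rule has_integral_spike_finite[of "{}"])
    show "((\<lambda>x. p2*x^2 + p1*x + p0) has_integral (p2/24 - p1/8 + p0/2)) {-(1/2)..0}"
      using poly_int[of "-(1/2)" 0 p2 p1 p0] by (simp add: power2_eq_square power3_eq_cube)
  qed auto
  have i2: "((\<lambda>x. p2*x^2 + p1*x + p0 + (if x > 0 then r1*x + r0 else 0)) has_integral
            (p2/24 + (p1+r1)/8 + (p0+r0)/2)) {0..1/2}"
  proof (rule has_integral_spike_finite[of "{0}"])
    show "((\<lambda>x. p2*x^2 + (p1+r1)*x + (p0+r0)) has_integral (p2/24 + (p1+r1)/8 + (p0+r0)/2)) {0..1/2}"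
      using poly_int[of 0 "1/2" p2 "p1+r1" "p0+r0"] by (simp add: power2_eq_square power3_eq_cube)
  qed (auto simp: algebra_simps)
  have "((\<lambda>x. p2*x^2 + p1*x + p0 + (if x > 0 then r1*x + r0 else 0)) has_integral
            ((p2/24 - p1/8 + p0/2) + (p2/24 + (p1+r1)/8 + (p0+r0)/2))) {-(1/2)..1/2}"
    by (rule has_integral_combine[OF _ _ i1 i2]) auto
  then show ?thesis by (rule has_integral_eq_rhs) (simp add: field_simps)
qed

lemma bil_expand:
  assumes b: "bilinear \<beta>"
  shows "\<beta> (x *\<^sub>R R + S + t *\<^sub>R P) (x *\<^sub>R R + S + t *\<^sub>R P)
    = \<beta> R R * x^2 + (\<beta> R S + \<beta> S R) * x + \<beta> S S + t*t*\<beta> P P + t*x*(\<beta> R P + \<beta> P R)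
      + t*(\<beta> S P + \<beta> P S)"
  using b by (simp add: bilinear_ladd bilinear_radd bilinear_lmul bilinear_rmul algebra_simps power2_eq_square)

lemma mat_int:
  fixes \<beta> :: "mat2 \<Rightarrow> mat2 \<Rightarrow> real"
  assumes b: "bilinear \<beta>"
  shows "((\<lambda>x. \<beta> (x *\<^sub>R R + S + (if x > 0 then P else 0)) (x *\<^sub>R R + S + (if x > 0 then P else 0)))
     has_integral (\<beta> R R/12 + \<beta> S S + \<beta> P P/2 + (\<beta> R P + \<beta> P R)/8 + (\<beta> S P + \<beta> P S)/2))
     {-(1/2)..1/2}"
proof -
  have eq: "\<beta> (x *\<^sub>R R + S + (if x > 0 then P else 0)) (x *\<^sub>R R + S + (if x > 0 then P else 0))
     = \<beta> R R * x^2 + (\<beta> R S + \<beta> S R) * x + \<beta> S S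
       + (if x > 0 then (\<beta> R P + \<beta> P R) * x + (\<beta> P P + \<beta> S P + \<beta> P S) else 0)" for x
  proof (cases "x > 0")
    case True then show ?thesis using bil_expand[OF b, of x R S 1 P] by (simp add: algebra_simps)
  next
    case False then show ?thesis using bil_expand[OF b, of x R S 0 P] by (simp add: algebra_simps)
  qed
  show ?thesis
    unfolding eq using piece_int[of "\<beta> R R" "\<beta> R S + \<beta> S R" "\<beta> S S" "\<beta> R P + \<beta> P R"
        "\<beta> P P + \<beta> S P + \<beta> P S"]
    by (simp add: algebra_simps add_divide_distrib)
qed


lemma Sym2_zero: "0 \<in> Sym2" by (simp add: Sym2_def transpose_def vec_eq_iff)
lemma Sym2_add: "A \<in> Sym2 \<Longrightarrow> C \<in> Sym2 \<Longrightarrow> A + C \<in> Sym2" by (simp add: Sym2_def transpose_add)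
lemma Sym2_scale: "A \<in> Sym2 \<Longrightarrow> k *\<^sub>R A \<in> Sym2" by (simp add: Sym2_def transpose_scalar)
lemma Sym2_uminus: "A \<in> Sym2 \<Longrightarrow> - A \<in> Sym2"
  using Sym2_scale[of A "-1"] by simp
lemma Sym2_diff: "A \<in> Sym2 \<Longrightarrow> C \<in> Sym2 \<Longrightarrow> A - C \<in> Sym2"
  using Sym2_add[of A "(-1) *\<^sub>R C"] Sym2_scale[of C "-1"] by simp

lemma Gb_sym: "Gb i \<in> Sym2"
  by (auto simp: Sym2_def Gb_def transpose_def vec_eq_iff)

lemma BB_comp: assumes U: "U \<in> Sym2"
  shows "(\<Sum>i\<in>{1,2,3::nat}. (U \<bullet> Gb i) *\<^sub>R ((3/4) *\<^sub>R Gb i)) = (3/4) *\<^sub>R U"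
proof -
  have "transpose U $ 2 $ 1 = U $ 2 $ 1" using U by (simp add: Sym2_def)
  then have As: "U$2$1 = U$1$2" by (simp add: transpose_def)
  have s2: "sqrt 2 * sqrt 2 = (2::real)" by simp
  show ?thesis
    by (simp add: vec_eq_iff forall_2 inner_vec_def sum_2 Gb_def As field_simps s2)
qed

context qsetup begin

lemma bb_zero: "bb 0 X = 0" "bb X 0 = 0"
  using bil_bb by (simp_all add: bilinear_lzero bilinear_rzero)

lemma q2_zero: "q2 0 = 0" by (simp add: q2_bb bb_zero)

lemma q2_scale: "q2 (k *\<^sub>R A) = k^2 * q2 A"
  using bil_bb by (simp add: q2_bb bilinear_lmul bilinear_rmul power2_eq_square)

lemma int_q2: "integral {-(1/2)..1/2} (\<lambda>x. q2 (x *\<^sub>R R + S + (if x > 0 then P else 0))) =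
   q2 R/12 + q2 S + q2 P/2 + (bb R P + bb P R)/8 + (bb S P + bb P S)/2"
  unfolding q2_bb by (rule integral_unique[OF mat_int[OF bil_bb]])

lemma E_ident: "q2 A/12 + q2 M + q2 P/2 + (bb A P + bb P A)/8 + (bb M P + bb P M)/2
   = q2 (A + (3/2) *\<^sub>R P)/12 + q2 (M + (1/2) *\<^sub>R P) + q2 P/16"
  using bil_bb
  by (simp add: q2_bb bilinear_ladd bilinear_radd bilinear_lmul bilinear_rmul field_simps)

lemma Qel_eq: "Qel (\<lambda>_. Q) A = q2 A / 12"
proof -
  have I: "integral {-(1/2)..1/2} (\<lambda>x. Q2 (\<lambda>_. Q) x (x *\<^sub>R A + M)) = q2 A/12 + q2 M" for M
  proof -
    have "(\<lambda>x. Q2 (\<lambda>_. Q) x (x *\<^sub>R A + M)) = (\<lambda>x. q2 (x *\<^sub>R A + M + (if x > 0 then 0 else 0)))"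
      by (simp add: Q2_eq)
    then show ?thesis using int_q2[of A M 0] by (simp add: bb_zero q2_zero)
  qed
  show ?thesis unfolding Qel_def I
  proof (rule cInf_eq_minimum)
    show "q2 A / 12 \<in> (\<lambda>M. q2 A / 12 + q2 M) ` Sym2"
      using Sym2_zero by (auto simp: q2_zero intro!: image_eqI[where x=0])
  qed (auto simp: q2_nonneg)
qed

lemma Eres_eq: assumes U: "U \<in> Sym2" shows "Eres (\<lambda>_. Q) U = q2 U / 64"
proof -
  define P where "P = (1/2) *\<^sub>R U"
  have I: "integral {-(1/2)..1/2} (\<lambda>x. Q2 (\<lambda>_. Q) x (x *\<^sub>R fst AM + snd AM + (if x > 0 then (1/2) *\<^sub>R U else 0)))
      = q2 (fst AM + (3/2) *\<^sub>R P)/12 + q2 (snd AM + (1/2) *\<^sub>R P) + q2 P/16" for AM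
    using int_q2[of "fst AM" "snd AM" P] E_ident[of "fst AM" "snd AM" P] unfolding P_def by (simp add: Q2_eq)
  have P16: "q2 P / 16 = q2 U / 64" by (simp add: P_def q2_scale power2_eq_square)
  show ?thesis unfolding Eres_def I P16[symmetric]
  proof (rule cInf_eq_minimum)
    have "(-(3/2) *\<^sub>R P, -(1/2) *\<^sub>R P) \<in> Sym2 \<times> Sym2" using U by (simp add: P_def Sym2_scale Sym2_uminus)
    then show "q2 P / 16 \<in> (\<lambda>AM. q2 (fst AM + (3/2) *\<^sub>R P)/12 + q2 (snd AM + (1/2) *\<^sub>R P) + q2 P/16) ` (Sym2 \<times> Sym2)"
      by (intro image_eqI[where x="(-(3/2) *\<^sub>R P, -(1/2) *\<^sub>R P)"]) (auto simp: q2_zero algebra_simps)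
  qed (auto simp: q2_nonneg)
qed

lemma Jfun_eq: "Jfun (\<lambda>_. Q) i AM
   = q2 ((3/2) *\<^sub>R ((1/2) *\<^sub>R Gb i) - fst AM)/12 + q2 ((1/2) *\<^sub>R ((1/2) *\<^sub>R Gb i) - snd AM)
     + q2 ((1/2) *\<^sub>R Gb i)/16"
proof -
  define P where "P = (1/2) *\<^sub>R Gb i"
  have "(\<lambda>x. Q2 (\<lambda>_. Q) x ((if x > 0 then (1/2) *\<^sub>R Gb i else 0) - (x *\<^sub>R fst AM + snd AM)))
      = (\<lambda>x. q2 (x *\<^sub>R (- fst AM) + (- snd AM) + (if x > 0 then P else 0)))"
    by (auto simp: Q2_eq P_def algebra_simps)
  then show ?thesis unfolding Jfun_def P_def[symmetric]
    using int_q2[of "- fst AM" "- snd AM" P] E_ident[of "- fst AM" "- snd AM" P]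
    by (simp add: algebra_simps)
qed

lemma minimizer_eq: "minimizer (\<lambda>_. Q) i = ((3/4) *\<^sub>R Gb i, (1/4) *\<^sub>R Gb i)"
proof -
  define P where "P = (1/2) *\<^sub>R Gb i"
  have J: "Jfun (\<lambda>_. Q) i AM = q2 ((3/2) *\<^sub>R P - fst AM)/12 + q2 ((1/2) *\<^sub>R P - snd AM) + q2 P/16" for AM
    unfolding P_def by (rule Jfun_eq)
  have st: "((3/4) *\<^sub>R Gb i, (1/4) *\<^sub>R Gb i) = ((3/2) *\<^sub>R P, (1/2) *\<^sub>R P)" by (simp add: P_def)
  have PS: "P \<in> Sym2" by (simp add: P_def Sym2_scale Gb_sym)
  show ?thesis unfolding minimizer_def st
  proof (rule the_equality)
    show "((3/2) *\<^sub>R P, (1/2) *\<^sub>R P) \<in> Sym2 \<times> Sym2 \<and>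
        (\<forall>AM'\<in>Sym2 \<times> Sym2. Jfun (\<lambda>_. Q) i ((3/2) *\<^sub>R P, (1/2) *\<^sub>R P) \<le> Jfun (\<lambda>_. Q) i AM')"
      using PS by (auto simp: J q2_zero q2_nonneg Sym2_scale)
  next
    fix AM assume a: "AM \<in> Sym2 \<times> Sym2 \<and> (\<forall>AM'\<in>Sym2 \<times> Sym2. Jfun (\<lambda>_. Q) i AM \<le> Jfun (\<lambda>_. Q) i AM')"
    have "Jfun (\<lambda>_. Q) i AM \<le> Jfun (\<lambda>_. Q) i ((3/2) *\<^sub>R P, (1/2) *\<^sub>R P)"
      using a PS by (auto simp: Sym2_scale)
    then have "q2 ((3/2) *\<^sub>R P - fst AM)/12 + q2 ((1/2) *\<^sub>R P - snd AM) \<le> 0"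
      by (simp add: J q2_zero)
    then have z: "q2 ((3/2) *\<^sub>R P - fst AM) = 0" "q2 ((1/2) *\<^sub>R P - snd AM) = 0"
      using q2_nonneg[of "(3/2) *\<^sub>R P - fst AM"] q2_nonneg[of "(1/2) *\<^sub>R P - snd AM"] by linarith+
    have s: "(3/2) *\<^sub>R P - fst AM \<in> Sym2" "(1/2) *\<^sub>R P - snd AM \<in> Sym2"
      using a PS by (auto intro!: Sym2_diff Sym2_scale)
    from q2_pos[OF s(1) z(1)] q2_pos[OF s(2) z(2)] show "AM = ((3/2) *\<^sub>R P, (1/2) *\<^sub>R P)"
      by (simp add: prod_eq_iff)
  qed
qed

lemma BB_eq: assumes U: "U \<in> Sym2" shows "BB (\<lambda>_. Q) U = (3/4) *\<^sub>R U"
  unfolding BB_def minimizer_eq using BB_comp[OF U] by simp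

end

lemma symm_iota: assumes As: "A$2$1 = A$1$2" shows "symm (iota A) = iota A"
  by (simp add: vec_eq_iff forall_3 symm_def iota_def As)

lemma iota_ent3: "iota A $ 3 $ j = 0" "iota A $ i $ 3 = 0"
  by (simp_all add: iota_def)

lemma lame_Q:
  fixes A :: mat2 and Q :: "mat3 \<Rightarrow> real"
  assumes Qf: "\<forall>G. Q G = lam/2*(trace G)^2 + mu*(norm (symm G))^2" and As: "A$2$1 = A$1$2"
  shows "Q (iota A + Vd d) = lam/2 * (trace A + d$3)^2 + mu * ((norm A)^2 + (d$1)^2/2 + (d$2)^2/2 + (d$3)^2)"
    and "(norm (symm (iota A + Vd d)))^2 = (norm A)^2 + (d$1)^2/2 + (d$2)^2/2 + (d$3)^2"
proof -
  have tr: "trace (iota A + Vd d) = trace A + d$3"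
    by (simp add: trace_def sum_3 sum_2 iota_ent iota_ent3 Vd_ent e3_comp)
  have sy: "symm (iota A + Vd d) = iota A + Vd d"
    by (simp add: symm_add symm_Vd symm_iota[OF As])
  have nm: "(norm (iota A + Vd d))^2 = (norm A)^2 + (d$1)^2/2 + (d$2)^2/2 + (d$3)^2"
    unfolding frob_sq by (simp add: sum_3 sum_2 iota_ent iota_ent3 Vd_ent e3_comp As power2_eq_square field_simps)
  show "Q (iota A + Vd d) = lam/2 * (trace A + d$3)^2 + mu * ((norm A)^2 + (d$1)^2/2 + (d$2)^2/2 + (d$3)^2)"
    by (simp add: Qf tr sy nm)
  show "(norm (symm (iota A + Vd d)))^2 = (norm A)^2 + (d$1)^2/2 + (d$2)^2/2 + (d$3)^2"
    by (simp add: sy nm)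
qed

context qsetup begin

lemma lame_q2:
  assumes Qf: "\<forall>G. Q G = lam/2*(trace G)^2 + mu*(norm (symm G))^2" and A: "A \<in> Sym2"
  shows "q2 A = mu * lam / (lam + 2 * mu) * (trace A)^2 + mu * (norm A)^2"
proof -
  have "transpose A $ 2 $ 1 = A $ 2 $ 1" using A by (simp add: Sym2_def)
  then have As: "A$2$1 = A$1$2" by (simp add: transpose_def)
  have Z: "(0::mat2)$2$1 = 0$1$2" by simp
  have ax1: "(axis 1 1 :: real^3)$1 = 1" "(axis 1 1 :: real^3)$2 = 0" "(axis 1 1 :: real^3)$3 = 0"
    by (simp_all add: axis_def)
  have ax3: "(axis 3 1 :: real^3)$1 = 0" "(axis 3 1 :: real^3)$2 = 0" "(axis 3 1 :: real^3)$3 = 1"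
    by (simp_all add: axis_def)
  have "c * (norm (symm (iota 0 + Vd (axis 1 1))))^2 \<le> Q (iota 0 + Vd (axis 1 1))" by (rule coer)
  then have "c * (1/2) \<le> mu * (1/2)" using lame_Q[OF Qf Z, of "axis 1 1"] by (simp add: ax1 trace_def)
  then have mu: "mu > 0" using cpos by simp
  have "c * (norm (symm (iota 0 + Vd (axis 3 1))))^2 \<le> Q (iota 0 + Vd (axis 3 1))" by (rule coer)
  then have "c \<le> lam/2 + mu" using lame_Q[OF Qf Z, of "axis 3 1"] by (simp add: ax3 trace_def)
  then have k: "lam + 2*mu > 0" using cpos by simp
  define t where "t = trace A"
  define y where "y = lam*t/(lam+2*mu)"
  have ky: "(lam+2*mu)*y = lam*t" using k by (simp add: y_def)
  define v where "v = mu * t * y + mu * (norm A)^2"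
  have ident: "lam/2*(t+x)^2 + mu*x^2 = mu * t * y + (lam+2*mu)/2*(x + y)^2" for x
  proof -
    have "(mu * t * y + (lam+2*mu)/2*(x + y)^2) - (lam/2*(t+x)^2 + mu*x^2)
        = (x + y/2 + t/2)*((lam+2*mu)*y - lam*t)"
      by (simp add: power2_eq_square field_simps)
    then show ?thesis using ky by simp
  qed
  have low: "v \<le> Q (iota A + Vd d)" for d
  proof -
    have "Q (iota A + Vd d) = lam/2*(t + d$3)^2 + mu*(d$3)^2 + mu*(norm A)^2 + mu*((d$1)^2/2 + (d$2)^2/2)"
      unfolding lame_Q(1)[OF Qf As] t_def by (simp add: algebra_simps)
    also have "\<dots> = v + (lam+2*mu)/2*(d$3 + y)^2 + mu*((d$1)^2/2 + (d$2)^2/2)"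
      unfolding ident v_def by simp
    finally show ?thesis using k mu by (simp add: add_nonneg_nonneg)
  qed
  define ds :: "real^3" where "ds = (\<chi> i. if i = 3 then - y else 0)"
  have dsc: "ds$1 = 0" "ds$2 = 0" "ds$3 = - y" by (simp_all add: ds_def)
  have up: "Q (iota A + Vd ds) = v"
  proof -
    have "Q (iota A + Vd ds) = lam/2*(t + ds$3)^2 + mu*(ds$3)^2 + mu*(norm A)^2"
      unfolding lame_Q(1)[OF Qf As] t_def by (simp add: algebra_simps dsc)
    also have "\<dots> = v" unfolding ident v_def by (simp add: dsc)
    finally show ?thesis .
  qed
  have "q2 A \<le> v" using L_min[of "iota A" ds] up by (simp add: q2_def)
  moreover have "v \<le> q2 A" using low[of "dstar (iota A)"] by (simp add: q2_def L_def)
  moreover have "mu * t * y = mu * lam / (lam + 2 * mu) * (trace A)^2"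
    by (simp add: y_def t_def power2_eq_square)
  ultimately show ?thesis by (simp add: v_def)
qed

end
theorem lemma2p4:
  fixes CW qW :: real and rW :: "real \<Rightarrow> ereal"
    and W :: "mat3 \<Rightarrow> ereal" and Q :: "mat3 \<Rightarrow> real"
  assumes "assumption_W CW qW rW W Q"
  shows "(\<forall>A\<in>Sym2. Qel (\<lambda>_. Q) A = (1/12) * (INF d. Q (iota A + symm (outer d e3))))
       \<and> (\<forall>U\<in>Sym2. Eres (\<lambda>_. Q) U = (3/16) * Qel (\<lambda>_. Q) U)
       \<and> (\<forall>U\<in>Sym2. BB (\<lambda>_. Q) U = (3/4) *\<^sub>R U)
       \<and> (\<forall>lam mu :: real. (\<forall>G. Q G = lam / 2 * (trace G)\<^sup>2 + mu * (norm (symm G))\<^sup>2) \<longrightarrow>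
            (\<forall>A\<in>Sym2. Qel (\<lambda>_. Q) A
               = (1/12) * (mu * lam / (lam + 2 * mu) * (trace A)\<^sup>2 + mu * (norm A)\<^sup>2))
          \<and> (\<forall>U\<in>Sym2. Eres (\<lambda>_. Q) U
               = (1/64) * (mu * lam / (lam + 2 * mu) * (trace U)\<^sup>2 + mu * (norm U)\<^sup>2)))"
proof -
  from assms obtain B where B: "bilinear B" "\<forall>G. Q G = B G G"
    unfolding assumption_W_def quadratic_form_def by auto
  have CW: "CW > 0" using assms unfolding assumption_W_def by auto
  interpret qs: qsetup Q B "4/(25*CW)"
  proof
    show "bilinear B" by (rule B(1))
    show "\<And>G. Q G = B G G" using B(2) by simp
    show "0 < 4/(25*CW)" using CW by simp
    show "\<And>G. 4/(25*CW) * (norm (symm G))^2 \<le> Q G" using coercive[OF assms] by simp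
  qed
  have INFq: "(INF d. Q (iota A + symm (outer d e3))) = qs.q2 A" for A
    using qs.INF_L[of "iota A"] by (simp add: Vd_def qs.q2_def)
  have P1: "\<forall>A\<in>Sym2. Qel (\<lambda>_. Q) A = (1/12) * (INF d. Q (iota A + symm (outer d e3)))"
    by (simp add: INFq qs.Qel_eq)
  have P2: "\<forall>U\<in>Sym2. Eres (\<lambda>_. Q) U = (3/16) * Qel (\<lambda>_. Q) U"
    by (simp add: qs.Eres_eq qs.Qel_eq)
  have P3: "\<forall>U\<in>Sym2. BB (\<lambda>_. Q) U = (3/4) *\<^sub>R U"
    by (simp add: qs.BB_eq)
  have P4: "\<forall>lam mu :: real. (\<forall>G. Q G = lam / 2 * (trace G)\<^sup>2 + mu * (norm (symm G))\<^sup>2) \<longrightarrow>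
            (\<forall>A\<in>Sym2. Qel (\<lambda>_. Q) A
               = (1/12) * (mu * lam / (lam + 2 * mu) * (trace A)\<^sup>2 + mu * (norm A)\<^sup>2))
          \<and> (\<forall>U\<in>Sym2. Eres (\<lambda>_. Q) U
               = (1/64) * (mu * lam / (lam + 2 * mu) * (trace U)\<^sup>2 + mu * (norm U)\<^sup>2))"
  proof (intro allI impI conjI ballI)
    fix lam mu :: real
    assume Qf: "\<forall>G. Q G = lam / 2 * (trace G)\<^sup>2 + mu * (norm (symm G))\<^sup>2"
    fix A assume "A \<in> Sym2"
    then show "Qel (\<lambda>_. Q) A = (1/12) * (mu * lam / (lam + 2 * mu) * (trace A)\<^sup>2 + mu * (norm A)\<^sup>2)"
      using qs.lame_q2[OF Qf] by (simp add: qs.Qel_eq)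
  next
    fix lam mu :: real
    assume Qf: "\<forall>G. Q G = lam / 2 * (trace G)\<^sup>2 + mu * (norm (symm G))\<^sup>2"
    fix U assume "U \<in> Sym2"
    then show "Eres (\<lambda>_. Q) U = (1/64) * (mu * lam / (lam + 2 * mu) * (trace U)\<^sup>2 + mu * (norm U)\<^sup>2)"
      using qs.lame_q2[OF Qf] by (simp add: qs.Eres_eq)
  qed
  show ?thesis using P1 P2 P3 P4 by blast
qed

end
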